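(* Let $R$ be a local ring with maximal ideal $\mathcal{M}$ such that $\mathcal{M}$ is finitely generated both as a left ideal and as a right ideal. If every left $R$-module generated by two elements is a direct sum of cyclic modules, then either $\mathcal{M}$ is a principal left ideal or $\mathcal{M}$ is a principal right ideal.
   Context: All rings have identity and modules are unital. A ring $R$ is local if it has a unique maximal left ideal $\mathcal{M}$ (which is then the Jacobson radical and a two-sided ideal). *)

theory Defs
  imports "HOL-Algebra.Module" "HOL-Algebra.Ideal"
begin

text \<open>Left modules over a not necessarily commutative ring (the library locale
  module requires a commutative ring, so we state the axioms ourselves).\<close>

definition left_module :: "('a, 'c) ring_scheme \<Rightarrow> ('a, 'm, 'd) module_scheme \<Rightarrow> bool" where
  "left_module R M \<longleftrightarrow> ring R \<and> abelian_group M \<and>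
    (\<forall>a\<in>carrier R. \<forall>x\<in>carrier M. a \<odot>\<^bsub>M\<^esub> x \<in> carrier M) \<and>
    (\<forall>a\<in>carrier R. \<forall>b\<in>carrier R. \<forall>x\<in>carrier M.
        (a \<oplus>\<^bsub>R\<^esub> b) \<odot>\<^bsub>M\<^esub> x = a \<odot>\<^bsub>M\<^esub> x \<oplus>\<^bsub>M\<^esub> b \<odot>\<^bsub>M\<^esub> x) \<and>
    (\<forall>a\<in>carrier R. \<forall>x\<in>carrier M. \<forall>y\<in>carrier M.
        a \<odot>\<^bsub>M\<^esub> (x \<oplus>\<^bsub>M\<^esub> y) = a \<odot>\<^bsub>M\<^esub> x \<oplus>\<^bsub>M\<^esub> a \<odot>\<^bsub>M\<^esub> y) \<and>
    (\<forall>a\<in>carrier R. \<forall>b\<in>carrier R. \<forall>x\<in>carrier M.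
        (a \<otimes>\<^bsub>R\<^esub> b) \<odot>\<^bsub>M\<^esub> x = a \<odot>\<^bsub>M\<^esub> (b \<odot>\<^bsub>M\<^esub> x)) \<and>
    (\<forall>x\<in>carrier M. \<one>\<^bsub>R\<^esub> \<odot>\<^bsub>M\<^esub> x = x)"

definition left_ideal :: "('a, 'c) ring_scheme \<Rightarrow> 'a set \<Rightarrow> bool" where
  "left_ideal R I \<longleftrightarrow> additive_subgroup I R \<and>
     (\<forall>a\<in>carrier R. \<forall>x\<in>I. a \<otimes>\<^bsub>R\<^esub> x \<in> I)"

definition right_ideal :: "('a, 'c) ring_scheme \<Rightarrow> 'a set \<Rightarrow> bool" where
  "right_ideal R I \<longleftrightarrow> additive_subgroup I R \<and>
     (\<forall>a\<in>carrier R. \<forall>x\<in>I. x \<otimes>\<^bsub>R\<^esub> a \<in> I)"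

definition maximal_left_ideal :: "('a, 'c) ring_scheme \<Rightarrow> 'a set \<Rightarrow> bool" where
  "maximal_left_ideal R I \<longleftrightarrow> left_ideal R I \<and> I \<noteq> carrier R \<and>
     (\<forall>J. left_ideal R J \<and> I \<subseteq> J \<and> J \<noteq> carrier R \<longrightarrow> J = I)"

definition local_ring :: "('a, 'c) ring_scheme \<Rightarrow> bool" where
  "local_ring R \<longleftrightarrow> ring R \<and> (\<exists>!I. maximal_left_ideal R I)"

definition left_ideal_gen :: "('a, 'c) ring_scheme \<Rightarrow> 'a set \<Rightarrow> 'a set" where
  "left_ideal_gen R S = {finsum R (\<lambda>s. f s \<otimes>\<^bsub>R\<^esub> s) S | f. f \<in> S \<rightarrow> carrier R}"

definition right_ideal_gen :: "('a, 'c) ring_scheme \<Rightarrow> 'a set \<Rightarrow> 'a set" where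
  "right_ideal_gen R S = {finsum R (\<lambda>s. s \<otimes>\<^bsub>R\<^esub> f s) S | f. f \<in> S \<rightarrow> carrier R}"

definition fg_left_ideal :: "('a, 'c) ring_scheme \<Rightarrow> 'a set \<Rightarrow> bool" where
  "fg_left_ideal R I \<longleftrightarrow> left_ideal R I \<and>
     (\<exists>S. finite S \<and> S \<subseteq> carrier R \<and> I = left_ideal_gen R S)"

definition fg_right_ideal :: "('a, 'c) ring_scheme \<Rightarrow> 'a set \<Rightarrow> bool" where
  "fg_right_ideal R I \<longleftrightarrow> right_ideal R I \<and>
     (\<exists>S. finite S \<and> S \<subseteq> carrier R \<and> I = right_ideal_gen R S)"

definition principal_left_ideal :: "('a, 'c) ring_scheme \<Rightarrow> 'a set \<Rightarrow> bool" where
  "principal_left_ideal R I \<longleftrightarrow> (\<exists>a\<in>carrier R. I = {r \<otimes>\<^bsub>R\<^esub> a | r. r \<in> carrier R})"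

definition principal_right_ideal :: "('a, 'c) ring_scheme \<Rightarrow> 'a set \<Rightarrow> bool" where
  "principal_right_ideal R I \<longleftrightarrow> (\<exists>a\<in>carrier R. I = {a \<otimes>\<^bsub>R\<^esub> r | r. r \<in> carrier R})"

definition two_generated :: "('a, 'c) ring_scheme \<Rightarrow> ('a, 'm, 'd) module_scheme \<Rightarrow> bool" where
  "two_generated R M \<longleftrightarrow> (\<exists>x\<in>carrier M. \<exists>y\<in>carrier M.
     carrier M = {a \<odot>\<^bsub>M\<^esub> x \<oplus>\<^bsub>M\<^esub> b \<odot>\<^bsub>M\<^esub> y | a b. a \<in> carrier R \<and> b \<in> carrier R})"

text \<open>M is a direct sum of cyclic modules: M is the internal direct sum of finitely
  many cyclic submodules R x_0, ..., R x_(n-1).  (A finitely generated module that is a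
  direct sum of modules has only finitely many nonzero summands, so finitely many
  summands is no restriction.)\<close>

definition direct_sum_of_cyclics :: "('a, 'c) ring_scheme \<Rightarrow> ('a, 'm, 'd) module_scheme \<Rightarrow> bool" where
  "direct_sum_of_cyclics R M \<longleftrightarrow> (\<exists>(n::nat) (x::nat \<Rightarrow> 'm).
     (\<forall>i<n. x i \<in> carrier M) \<and>
     (\<forall>m\<in>carrier M. \<exists>a. (\<forall>i<n. a i \<in> carrier R) \<and>
         m = finsum M (\<lambda>i. a i \<odot>\<^bsub>M\<^esub> x i) {..<n}) \<and>
     (\<forall>a. (\<forall>i<n. a i \<in> carrier R) \<and> finsum M (\<lambda>i. a i \<odot>\<^bsub>M\<^esub> x i) {..<n} = \<zero>\<^bsub>M\<^esub>
         \<longrightarrow> (\<forall>i<n. a i \<odot>\<^bsub>M\<^esub> x i = \<zero>\<^bsub>M\<^esub>)))"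

end

theory Submission
  imports Defs
begin


lemma add_subgroup_intro:
  assumes "ring R" "H \<subseteq> carrier R" "\<zero>\<^bsub>R\<^esub> \<in> H"
    "\<And>x y. x \<in> H \<Longrightarrow> y \<in> H \<Longrightarrow> x \<oplus>\<^bsub>R\<^esub> y \<in> H"
    "\<And>x. x \<in> H \<Longrightarrow> \<ominus>\<^bsub>R\<^esub> x \<in> H"
  shows "additive_subgroup H R"
  apply (rule additive_subgroupI)
  apply (rule subgroup.intro)
  using assms by (auto simp: a_inv_def)

locale lr = ring R for R (structure) +
  fixes Max
  assumes maxl: "maximal_left_ideal R Max"
    and uniq: "\<And>I. maximal_left_ideal R I \<Longrightarrow> I = Max"
begin

lemma Max_li: "left_ideal R Max" using maxl by (simp add: maximal_left_ideal_def)
lemma Max_as: "additive_subgroup Max R" using Max_li by (simp add: left_ideal_def)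
lemma Max_sub: "Max \<subseteq> carrier R" using additive_subgroup.a_subset[OF Max_as] .
lemma Max_add: "x \<in> Max \<Longrightarrow> y \<in> Max \<Longrightarrow> x \<oplus> y \<in> Max"
  using additive_subgroup.a_closed[OF Max_as] by blast
lemma Max_zero: "\<zero> \<in> Max" using additive_subgroup.zero_closed[OF Max_as] .
lemma Max_neg: "x \<in> Max \<Longrightarrow> \<ominus> x \<in> Max"
  using additive_subgroup.a_inv_closed[OF Max_as] by blast
lemma Max_lmult: "a \<in> carrier R \<Longrightarrow> x \<in> Max \<Longrightarrow> a \<otimes> x \<in> Max"
  using Max_li by (simp add: left_ideal_def)
lemma Max_minus: "x \<in> Max \<Longrightarrow> y \<in> Max \<Longrightarrow> x \<ominus> y \<in> Max"
  by (simp add: Max_add Max_neg minus_eq)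

lemma one_notin: "\<one> \<notin> Max"
proof
  assume "\<one> \<in> Max"
  then have "carrier R \<subseteq> Max" using Max_lmult by (metis r_one subsetI)
  then show False using maxl Max_sub by (auto simp: maximal_left_ideal_def)
qed

lemma li_one: "left_ideal R J \<Longrightarrow> \<one> \<in> J \<Longrightarrow> J = carrier R"
  unfolding left_ideal_def using additive_subgroup.a_subset by (metis r_one subsetI subset_antisym)

lemma proper_sub_Max:
  assumes J: "left_ideal R J" and one: "\<one> \<notin> J"
  shows "J \<subseteq> Max"
proof -
  let ?A = "{I. left_ideal R I \<and> J \<subseteq> I \<and> \<one> \<notin> I}"
  have "\<exists>M\<in>?A. \<forall>X\<in>?A. M \<subseteq> X \<longrightarrow> X = M"
  proof (rule Zorn_Lemma2, rule ballI)
    fix C assume C: "C \<in> chains ?A"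
    show "\<exists>U\<in>?A. \<forall>X\<in>C. X \<subseteq> U"
    proof (cases "C = {}")
      case True then show ?thesis using J one by auto
    next
      case False
      have CA: "C \<subseteq> ?A" and ch: "chain\<^sub>\<subseteq> C" using C by (auto simp: chains_def)
      have CAI: "additive_subgroup I R" if "I \<in> C" for I
      proof -
        have "I \<in> ?A" using CA that by blast
        then show ?thesis by (simp add: left_ideal_def)
      qed
      have li: "left_ideal R (\<Union>C)"
        unfolding left_ideal_def
      proof
        show "additive_subgroup (\<Union>C) R"
        proof (rule add_subgroup_intro)
          show "ring R" by (rule ring_axioms)
          show "\<Union>C \<subseteq> carrier R"
          proof
            fix x assume "x \<in> \<Union>C"
            then obtain X where X: "X \<in> C" "x \<in> X" by auto
            then have "additive_subgroup X R" using CAI by blast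
            then have "X \<subseteq> carrier R" by (rule additive_subgroup.a_subset)
            then show "x \<in> carrier R" using X by blast
          qed
          obtain I where "I \<in> C" using False by auto
          have "additive_subgroup I R" using CAI \<open>I \<in> C\<close> by blast
          then have "\<zero> \<in> I" by (rule additive_subgroup.zero_closed)
          then show "\<zero> \<in> \<Union>C" using \<open>I \<in> C\<close> by blast
          fix x y assume "x \<in> \<Union>C" "y \<in> \<Union>C"
          then obtain I1 I2 where "I1 \<in> C" "I2 \<in> C" "x \<in> I1" "y \<in> I2" by auto
          then have "\<exists>I\<in>C. x \<in> I \<and> y \<in> I" using ch unfolding chain_subset_def by blast
          then obtain I where I: "I \<in> C" "x \<in> I" "y \<in> I" by blast
          have "additive_subgroup I R" using CAI I by blast
          then have "x \<oplus> y \<in> I" using additive_subgroup.a_closed[OF _ I(2) I(3)] by blast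
          then show "x \<oplus> y \<in> \<Union>C" using I by blast
        next
          fix x assume "x \<in> \<Union>C"
          then obtain I where I: "I \<in> C" "x \<in> I" by blast
          have "additive_subgroup I R" using CAI I by blast
          then have "\<ominus> x \<in> I" using additive_subgroup.a_inv_closed[OF _ I(2)] by blast
          then show "\<ominus> x \<in> \<Union>C" using I by blast
        qed
        show "\<forall>a\<in>carrier R. \<forall>x\<in>\<Union>C. a \<otimes> x \<in> \<Union>C"
        proof (intro ballI)
          fix c x assume c: "c \<in> carrier R" and "x \<in> \<Union>C"
          then obtain I where I: "I \<in> C" "x \<in> I" by blast
          have "I \<in> ?A" using CA I by blast
          then have "c \<otimes> x \<in> I" using c I by (simp add: left_ideal_def)
          then show "c \<otimes> x \<in> \<Union>C" using I by blast
        qed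
      qed
      have "J \<subseteq> \<Union>C"
      proof -
        obtain I where I: "I \<in> C" using False by blast
        have "I \<in> ?A" using CA I by blast
        then show ?thesis using I by blast
      qed
      moreover have "\<one> \<notin> \<Union>C"
      proof
        assume "\<one> \<in> \<Union>C"
        then obtain I where I: "I \<in> C" "\<one> \<in> I" by blast
        have "I \<in> ?A" using CA I by blast
        then show False using I by blast
      qed
      ultimately have "\<Union>C \<in> ?A" using li by blast
      then show ?thesis by auto
    qed
  qed
  then obtain M where M: "M \<in> ?A" and mx: "\<forall>X\<in>?A. M \<subseteq> X \<longrightarrow> X = M" by blast
  have "maximal_left_ideal R M"
    unfolding maximal_left_ideal_def
  proof (intro conjI allI impI)
    show "left_ideal R M" using M by auto
    show "M \<noteq> carrier R" using M by auto
    fix K assume K: "left_ideal R K \<and> M \<subseteq> K \<and> K \<noteq> carrier R"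
    then have "\<one> \<notin> K" using li_one by auto
    then show "K = M" using mx K M by auto
  qed
  then have "M = Max" by (rule uniq)
  then show ?thesis using M by auto
qed

lemma left_inv:
  assumes x: "x \<in> carrier R" "x \<notin> Max"
  shows "\<exists>y\<in>carrier R. y \<otimes> x = \<one>"
proof (rule ccontr)
  assume no: "\<not> ?thesis"
  let ?J = "{r \<otimes> x | r. r \<in> carrier R}"
  have li: "left_ideal R ?J"
    unfolding left_ideal_def
  proof
    show "additive_subgroup ?J R"
    proof (rule add_subgroup_intro)
      show "ring R" by (rule ring_axioms)
      show "?J \<subseteq> carrier R" using x by auto
      show "\<zero> \<in> ?J" using x by (auto intro!: exI[of _ \<zero>])
      fix a b assume "a \<in> ?J" "b \<in> ?J"
      then obtain r s where "r \<in> carrier R" "s \<in> carrier R" "a = r \<otimes> x" "b = s \<otimes> x" by auto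
      then show "a \<oplus> b \<in> ?J" using x by (auto intro!: exI[of _ "r \<oplus> s"] simp: l_distr)
    next
      fix a assume "a \<in> ?J"
      then obtain r where "r \<in> carrier R" "a = r \<otimes> x" by auto
      then show "\<ominus> a \<in> ?J" using x by (auto intro!: exI[of _ "\<ominus> r"] simp: l_minus)
    qed
    show "\<forall>a\<in>carrier R. \<forall>y\<in>?J. a \<otimes> y \<in> ?J"
    proof (intro ballI)
      fix c y assume "c \<in> carrier R" "y \<in> ?J"
      then obtain r where "r \<in> carrier R" "y = r \<otimes> x" by auto
      then show "c \<otimes> y \<in> ?J" using x \<open>c \<in> carrier R\<close> by (auto intro!: exI[of _ "c \<otimes> r"] simp: m_assoc)
    qed
  qed
  have "\<one> \<notin> ?J" using no by auto
  then have "?J \<subseteq> Max" using proper_sub_Max li by blast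
  moreover have "x \<in> ?J" using x by (auto intro!: exI[of _ \<one>])
  ultimately show False using x by auto
qed

lemma unit:
  assumes x: "x \<in> carrier R" "x \<notin> Max"
  shows "x \<in> Units R"
proof -
  obtain y where y: "y \<in> carrier R" "y \<otimes> x = \<one>" using left_inv[OF x] by blast
  have e0: "(\<one> \<ominus> x \<otimes> y) \<otimes> x = x \<ominus> x \<otimes> (y \<otimes> x)" using x(1) y(1) by algebra
  have z: "(\<one> \<ominus> x \<otimes> y) \<otimes> x = \<zero>" unfolding e0 y(2) using x(1) by (simp add: minus_eq r_neg)
  have c: "\<one> \<ominus> x \<otimes> y \<in> Max"
  proof (rule ccontr)
    assume nm: "\<one> \<ominus> x \<otimes> y \<notin> Max"
    have "\<one> \<ominus> x \<otimes> y \<in> carrier R" using x(1) y(1) by simp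
    then obtain g where g: "g \<in> carrier R" "g \<otimes> (\<one> \<ominus> x \<otimes> y) = \<one>"
      using left_inv[of "\<one> \<ominus> x \<otimes> y"] nm by blast
    have "g \<otimes> ((\<one> \<ominus> x \<otimes> y) \<otimes> x) = (g \<otimes> (\<one> \<ominus> x \<otimes> y)) \<otimes> x"
      using g(1) x(1) y(1) by (simp add: m_assoc)
    then have "x = \<zero>" using z g x(1) by simp
    then show False using x Max_zero by simp
  qed
  have "x \<otimes> y \<notin> Max"
  proof
    assume "x \<otimes> y \<in> Max"
    then have "(\<one> \<ominus> x \<otimes> y) \<oplus> x \<otimes> y \<in> Max" using c Max_add by blast
    moreover have "(\<one> \<ominus> x \<otimes> y) \<oplus> x \<otimes> y = \<one>" using x(1) y(1) by algebra
    ultimately show False using one_notin by simp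
  qed
  moreover have "x \<otimes> y \<in> carrier R" using x(1) y(1) by simp
  ultimately obtain h where h: "h \<in> carrier R" "h \<otimes> (x \<otimes> y) = \<one>" using left_inv[of "x \<otimes> y"] by blast
  have "h \<otimes> x = (h \<otimes> x) \<otimes> (y \<otimes> x)" using h(1) x(1) y by simp
  also have "\<dots> = (h \<otimes> (x \<otimes> y)) \<otimes> x" using h(1) x(1) y(1) by (simp add: m_assoc)
  also have "\<dots> = x" using h x(1) by simp
  finally have hx: "h \<otimes> x = x" .
  have "x \<otimes> y = (h \<otimes> x) \<otimes> y" using hx by simp
  also have "\<dots> = h \<otimes> (x \<otimes> y)" using h(1) x(1) y(1) by (simp add: m_assoc)
  also have "\<dots> = \<one>" using h by simp
  finally have "x \<otimes> y = \<one>" .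
  then show ?thesis using x y unfolding Units_def by auto
qed

lemma Max_rmult:
  assumes m: "m \<in> Max" and r: "r \<in> carrier R"
  shows "m \<otimes> r \<in> Max"
proof (rule ccontr)
  assume "m \<otimes> r \<notin> Max"
  moreover have mc: "m \<in> carrier R" using m Max_sub by auto
  ultimately have u: "m \<otimes> r \<in> Units R" using unit r by auto
  define y where "y = r \<otimes> inv (m \<otimes> r)"
  have yc: "y \<in> carrier R" using u r by (simp add: y_def)
  have my: "m \<otimes> y = \<one>" using u r mc by (simp add: y_def m_assoc[symmetric])
  have "y \<notin> Max"
  proof
    assume "y \<in> Max" then have "m \<otimes> y \<in> Max" using Max_lmult mc by auto
    then show False using my one_notin by simp
  qed
  then have yu: "y \<in> Units R" using unit yc by auto
  have iy: "inv y \<in> carrier R" using yu by (rule Units_inv_closed)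
  have "m = m \<otimes> (y \<otimes> inv y)" using yu mc by simp
  also have "\<dots> = (m \<otimes> y) \<otimes> inv y" using mc yc iy by (simp add: m_assoc)
  also have "\<dots> = inv y" using my iy by simp
  finally have "m = inv y" .
  then have "m \<in> Units R" using yu by simp
  then have "inv m \<otimes> m = \<one>" "inv m \<in> carrier R" by simp_all
  then have "\<one> \<in> Max" using Max_lmult[OF _ m, of "inv m"] by simp
  then show False using one_notin by simp
qed

lemma one_minus: "m \<in> Max \<Longrightarrow> \<one> \<ominus> m \<notin> Max"
proof
  assume "m \<in> Max" "\<one> \<ominus> m \<in> Max"
  then have "(\<one> \<ominus> m) \<oplus> m \<in> Max" using Max_add by blast
  moreover have "(\<one> \<ominus> m) \<oplus> m = \<one>" using \<open>m \<in> Max\<close> Max_sub by (simp add: subset_iff) algebra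
  ultimately show False using one_notin by simp
qed

end


definition cls :: "('a,'c) ring_scheme \<Rightarrow> 'a \<Rightarrow> 'a \<Rightarrow> 'a \<Rightarrow> 'a \<Rightarrow> ('a \<times> 'a) set" where
  "cls R a b u v = {(u \<oplus>\<^bsub>R\<^esub> t \<otimes>\<^bsub>R\<^esub> a, v \<oplus>\<^bsub>R\<^esub> t \<otimes>\<^bsub>R\<^esub> b) | t. t \<in> carrier R}"

definition QM :: "('a,'c) ring_scheme \<Rightarrow> 'a \<Rightarrow> 'a \<Rightarrow> ('a, ('a \<times> 'a) set) module" where
  "QM R a b = \<lparr>carrier = {cls R a b u v | u v. u \<in> carrier R \<and> v \<in> carrier R},
     mult = (\<lambda>A B. A), one = {}, zero = cls R a b \<zero>\<^bsub>R\<^esub> \<zero>\<^bsub>R\<^esub>,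
     add = (\<lambda>A B. {(fst p \<oplus>\<^bsub>R\<^esub> fst q, snd p \<oplus>\<^bsub>R\<^esub> snd q) | p q. p \<in> A \<and> q \<in> B}),
     smult = (\<lambda>r A. {(r \<otimes>\<^bsub>R\<^esub> fst p \<oplus>\<^bsub>R\<^esub> t \<otimes>\<^bsub>R\<^esub> a, r \<otimes>\<^bsub>R\<^esub> snd p \<oplus>\<^bsub>R\<^esub> t \<otimes>\<^bsub>R\<^esub> b) | p t. p \<in> A \<and> t \<in> carrier R})\<rparr>"

locale qm = lr +
  fixes a b
  assumes a: "a \<in> carrier R" and b: "b \<in> carrier R"
begin

abbreviation C where "C u v \<equiv> cls R a b u v"
abbreviation X where "X \<equiv> QM R a b"

lemma X_simps: "carrier X = {C u v | u v. u \<in> carrier R \<and> v \<in> carrier R}"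
  "zero X = C \<zero> \<zero>"
  "add X A B = {(fst p \<oplus> fst q, snd p \<oplus> snd q) | p q. p \<in> A \<and> q \<in> B}"
  "smult X r A = {(r \<otimes> fst p \<oplus> t \<otimes> a, r \<otimes> snd p \<oplus> t \<otimes> b) | p t. p \<in> A \<and> t \<in> carrier R}"
  by (simp_all add: QM_def)

lemma cls_mem: "p \<in> C u v \<longleftrightarrow> (\<exists>t\<in>carrier R. p = (u \<oplus> t \<otimes> a, v \<oplus> t \<otimes> b))"
  by (auto simp: cls_def)

lemma self_mem: "u \<in> carrier R \<Longrightarrow> v \<in> carrier R \<Longrightarrow> (u, v) \<in> C u v"
  unfolding cls_mem using a b by (auto intro!: bexI[of _ \<zero>])

lemma add_mem: "z \<in> add X A B \<longleftrightarrow> (\<exists>p\<in>A. \<exists>q\<in>B. z = (fst p \<oplus> fst q, snd p \<oplus> snd q))"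
  unfolding X_simps by blast

lemma smult_mem: "z \<in> smult X r A \<longleftrightarrow> (\<exists>p\<in>A. \<exists>t\<in>carrier R. z = (r \<otimes> fst p \<oplus> t \<otimes> a, r \<otimes> snd p \<oplus> t \<otimes> b))"
  unfolding X_simps by blast

lemma add_cls:
  assumes uv: "u \<in> carrier R" "v \<in> carrier R" "u' \<in> carrier R" "v' \<in> carrier R"
  shows "add X (C u v) (C u' v') = C (u \<oplus> u') (v \<oplus> v')"
proof (rule Set.set_eqI, rule iffI)
  fix z assume "z \<in> add X (C u v) (C u' v')"
  then obtain p q where pq: "p \<in> C u v" "q \<in> C u' v'" "z = (fst p \<oplus> fst q, snd p \<oplus> snd q)"
    unfolding add_mem by blast
  from pq(1) obtain t where t: "t \<in> carrier R" "p = (u \<oplus> t \<otimes> a, v \<oplus> t \<otimes> b)" unfolding cls_mem by blast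
  from pq(2) obtain t' where t': "t' \<in> carrier R" "q = (u' \<oplus> t' \<otimes> a, v' \<oplus> t' \<otimes> b)" unfolding cls_mem by blast
  have e1: "(u \<oplus> t \<otimes> a) \<oplus> (u' \<oplus> t' \<otimes> a) = (u \<oplus> u') \<oplus> (t \<oplus> t') \<otimes> a" using t(1) t'(1) uv a by algebra
  have e2: "(v \<oplus> t \<otimes> b) \<oplus> (v' \<oplus> t' \<otimes> b) = (v \<oplus> v') \<oplus> (t \<oplus> t') \<otimes> b" using t(1) t'(1) uv b by algebra
  have "z = ((u \<oplus> u') \<oplus> (t \<oplus> t') \<otimes> a, (v \<oplus> v') \<oplus> (t \<oplus> t') \<otimes> b)"
    using pq(3) t(2) t'(2) e1 e2 by simp
  moreover have "t \<oplus> t' \<in> carrier R" using t t' by simp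
  ultimately show "z \<in> C (u \<oplus> u') (v \<oplus> v')" unfolding cls_mem by blast
next
  fix z assume "z \<in> C (u \<oplus> u') (v \<oplus> v')"
  then obtain t where t: "t \<in> carrier R" "z = ((u \<oplus> u') \<oplus> t \<otimes> a, (v \<oplus> v') \<oplus> t \<otimes> b)"
    unfolding cls_mem by blast
  have "(u \<oplus> t \<otimes> a, v \<oplus> t \<otimes> b) \<in> C u v" unfolding cls_mem using t(1) by blast
  moreover have "(u', v') \<in> C u' v'" using self_mem uv by blast
  moreover have e1: "(u \<oplus> u') \<oplus> t \<otimes> a = (u \<oplus> t \<otimes> a) \<oplus> u'" using t(1) uv a by algebra
  moreover have e2: "(v \<oplus> v') \<oplus> t \<otimes> b = (v \<oplus> t \<otimes> b) \<oplus> v'" using t(1) uv b by algebra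
  ultimately show "z \<in> add X (C u v) (C u' v')" unfolding add_mem using t(2) by force
qed

lemma smult_cls:
  assumes uv: "u \<in> carrier R" "v \<in> carrier R" "r \<in> carrier R"
  shows "smult X r (C u v) = C (r \<otimes> u) (r \<otimes> v)"
proof (rule Set.set_eqI, rule iffI)
  fix z assume "z \<in> smult X r (C u v)"
  then obtain p t' where pq: "p \<in> C u v" "t' \<in> carrier R" "z = (r \<otimes> fst p \<oplus> t' \<otimes> a, r \<otimes> snd p \<oplus> t' \<otimes> b)"
    unfolding smult_mem by blast
  from pq(1) obtain t where t: "t \<in> carrier R" "p = (u \<oplus> t \<otimes> a, v \<oplus> t \<otimes> b)" unfolding cls_mem by blast
  have e1: "r \<otimes> (u \<oplus> t \<otimes> a) \<oplus> t' \<otimes> a = r \<otimes> u \<oplus> (r \<otimes> t \<oplus> t') \<otimes> a" using t(1) pq(2) uv a by algebra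
  have e2: "r \<otimes> (v \<oplus> t \<otimes> b) \<oplus> t' \<otimes> b = r \<otimes> v \<oplus> (r \<otimes> t \<oplus> t') \<otimes> b" using t(1) pq(2) uv b by algebra
  have "z = (r \<otimes> u \<oplus> (r \<otimes> t \<oplus> t') \<otimes> a, r \<otimes> v \<oplus> (r \<otimes> t \<oplus> t') \<otimes> b)"
    using pq(3) t(2) e1 e2 by simp
  moreover have "r \<otimes> t \<oplus> t' \<in> carrier R" using t pq(2) uv by simp
  ultimately show "z \<in> C (r \<otimes> u) (r \<otimes> v)" unfolding cls_mem by blast
next
  fix z assume "z \<in> C (r \<otimes> u) (r \<otimes> v)"
  then obtain t where t: "t \<in> carrier R" "z = (r \<otimes> u \<oplus> t \<otimes> a, r \<otimes> v \<oplus> t \<otimes> b)"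
    unfolding cls_mem by blast
  have "(u, v) \<in> C u v" using self_mem uv by blast
  then show "z \<in> smult X r (C u v)" unfolding smult_mem using t by force
qed

lemma cls_eq:
  assumes uv: "u \<in> carrier R" "v \<in> carrier R" "u' \<in> carrier R" "v' \<in> carrier R"
  shows "C u v = C u' v' \<longleftrightarrow> (\<exists>t\<in>carrier R. u = u' \<oplus> t \<otimes> a \<and> v = v' \<oplus> t \<otimes> b)"
proof
  assume "C u v = C u' v'"
  then have "(u, v) \<in> C u' v'" using self_mem uv by blast
  then show "\<exists>t\<in>carrier R. u = u' \<oplus> t \<otimes> a \<and> v = v' \<oplus> t \<otimes> b" unfolding cls_mem by blast
next
  assume "\<exists>t\<in>carrier R. u = u' \<oplus> t \<otimes> a \<and> v = v' \<oplus> t \<otimes> b"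
  then obtain t where t: "t \<in> carrier R" "u = u' \<oplus> t \<otimes> a" "v = v' \<oplus> t \<otimes> b" by blast
  show "C u v = C u' v'"
  proof (rule Set.set_eqI)
    fix p
    have "(\<exists>s\<in>carrier R. p = (u \<oplus> s \<otimes> a, v \<oplus> s \<otimes> b)) \<longleftrightarrow> (\<exists>s\<in>carrier R. p = (u' \<oplus> s \<otimes> a, v' \<oplus> s \<otimes> b))"
    proof
      assume "\<exists>s\<in>carrier R. p = (u \<oplus> s \<otimes> a, v \<oplus> s \<otimes> b)"
      then obtain s where s: "s \<in> carrier R" "p = (u \<oplus> s \<otimes> a, v \<oplus> s \<otimes> b)" by blast
      have e1: "(u' \<oplus> t \<otimes> a) \<oplus> s \<otimes> a = u' \<oplus> (t \<oplus> s) \<otimes> a" using t(1) s(1) uv a by algebra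
      have e2: "(v' \<oplus> t \<otimes> b) \<oplus> s \<otimes> b = v' \<oplus> (t \<oplus> s) \<otimes> b" using t(1) s(1) uv b by algebra
      have "t \<oplus> s \<in> carrier R" using t s by simp
      moreover have "p = (u' \<oplus> (t \<oplus> s) \<otimes> a, v' \<oplus> (t \<oplus> s) \<otimes> b)" using s(2) t(2,3) e1 e2 by simp
      ultimately show "\<exists>s\<in>carrier R. p = (u' \<oplus> s \<otimes> a, v' \<oplus> s \<otimes> b)" by blast
    next
      assume "\<exists>s\<in>carrier R. p = (u' \<oplus> s \<otimes> a, v' \<oplus> s \<otimes> b)"
      then obtain s where s: "s \<in> carrier R" "p = (u' \<oplus> s \<otimes> a, v' \<oplus> s \<otimes> b)" by blast
      have e1: "u' \<oplus> s \<otimes> a = (u' \<oplus> t \<otimes> a) \<oplus> (\<ominus> t \<oplus> s) \<otimes> a" using t(1) s(1) uv a by algebra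
      have e2: "v' \<oplus> s \<otimes> b = (v' \<oplus> t \<otimes> b) \<oplus> (\<ominus> t \<oplus> s) \<otimes> b" using t(1) s(1) uv b by algebra
      have "\<ominus> t \<oplus> s \<in> carrier R" using t s by simp
      moreover have "p = (u \<oplus> (\<ominus> t \<oplus> s) \<otimes> a, v \<oplus> (\<ominus> t \<oplus> s) \<otimes> b)" using s(2) t(2,3) e1 e2 by simp
      ultimately show "\<exists>s\<in>carrier R. p = (u \<oplus> s \<otimes> a, v \<oplus> s \<otimes> b)" by blast
    qed
    then show "p \<in> C u v \<longleftrightarrow> p \<in> C u' v'" unfolding cls_mem .
  qed
qed


lemma cls_in: "u \<in> carrier R \<Longrightarrow> v \<in> carrier R \<Longrightarrow> C u v \<in> carrier X"
  unfolding X_simps by blast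

lemma X_cases:
  assumes "A \<in> carrier X"
  obtains u v where "u \<in> carrier R" "v \<in> carrier R" "A = C u v"
  using assms unfolding X_simps by blast

lemma zero_iff:
  assumes "u \<in> carrier R" "v \<in> carrier R"
  shows "C u v = zero X \<longleftrightarrow> (\<exists>t\<in>carrier R. u = t \<otimes> a \<and> v = t \<otimes> b)"
proof -
  have "C u v = zero X \<longleftrightarrow> (\<exists>t\<in>carrier R. u = \<zero> \<oplus> t \<otimes> a \<and> v = \<zero> \<oplus> t \<otimes> b)"
    unfolding X_simps(2) using cls_eq[OF assms zero_closed zero_closed] .
  also have "\<dots> \<longleftrightarrow> (\<exists>t\<in>carrier R. u = t \<otimes> a \<and> v = t \<otimes> b)"
  proof (rule bex_cong[OF refl])
    fix t assume "t \<in> carrier R"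
    then show "(u = \<zero> \<oplus> t \<otimes> a \<and> v = \<zero> \<oplus> t \<otimes> b) = (u = t \<otimes> a \<and> v = t \<otimes> b)"
      using a b by simp
  qed
  finally show ?thesis .
qed

lemma X_ag: "abelian_group X"
proof (rule abelian_groupI)
  fix A B assume "A \<in> carrier X" "B \<in> carrier X"
  then show "A \<oplus>\<^bsub>X\<^esub> B \<in> carrier X"
    by (elim X_cases) (simp add: add_cls cls_in)
next
  show "\<zero>\<^bsub>X\<^esub> \<in> carrier X" unfolding X_simps(2) by (rule cls_in) simp_all
next
  fix A B D assume "A \<in> carrier X" "B \<in> carrier X" "D \<in> carrier X"
  then show "A \<oplus>\<^bsub>X\<^esub> B \<oplus>\<^bsub>X\<^esub> D = A \<oplus>\<^bsub>X\<^esub> (B \<oplus>\<^bsub>X\<^esub> D)"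
    by (elim X_cases) (simp add: add_cls a_assoc)
next
  fix A B assume "A \<in> carrier X" "B \<in> carrier X"
  then show "A \<oplus>\<^bsub>X\<^esub> B = B \<oplus>\<^bsub>X\<^esub> A"
    by (elim X_cases) (simp add: add_cls a_comm)
next
  fix A assume "A \<in> carrier X"
  then show "\<zero>\<^bsub>X\<^esub> \<oplus>\<^bsub>X\<^esub> A = A"
    unfolding X_simps(2) by (elim X_cases) (simp add: add_cls)
next
  fix A assume "A \<in> carrier X"
  then obtain u v where uv: "u \<in> carrier R" "v \<in> carrier R" "A = C u v" by (elim X_cases)
  have "C (\<ominus> u) (\<ominus> v) \<oplus>\<^bsub>X\<^esub> A = \<zero>\<^bsub>X\<^esub>"
    unfolding X_simps(2) uv(3) using uv(1,2) by (simp add: add_cls l_neg)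
  moreover have "C (\<ominus> u) (\<ominus> v) \<in> carrier X" using uv by (simp add: cls_in)
  ultimately show "\<exists>y\<in>carrier X. y \<oplus>\<^bsub>X\<^esub> A = \<zero>\<^bsub>X\<^esub>" by blast
qed

lemma sm_closed: "r \<in> carrier R \<Longrightarrow> A \<in> carrier X \<Longrightarrow> r \<odot>\<^bsub>X\<^esub> A \<in> carrier X"
  by (elim X_cases) (simp add: smult_cls cls_in)

lemma sm_ldistr: "r \<in> carrier R \<Longrightarrow> s \<in> carrier R \<Longrightarrow> A \<in> carrier X \<Longrightarrow>
    (r \<oplus> s) \<odot>\<^bsub>X\<^esub> A = r \<odot>\<^bsub>X\<^esub> A \<oplus>\<^bsub>X\<^esub> s \<odot>\<^bsub>X\<^esub> A"
  by (elim X_cases) (simp add: smult_cls add_cls l_distr)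

lemma sm_rdistr: "r \<in> carrier R \<Longrightarrow> A \<in> carrier X \<Longrightarrow> B \<in> carrier X \<Longrightarrow>
    r \<odot>\<^bsub>X\<^esub> (A \<oplus>\<^bsub>X\<^esub> B) = r \<odot>\<^bsub>X\<^esub> A \<oplus>\<^bsub>X\<^esub> r \<odot>\<^bsub>X\<^esub> B"
  by (elim X_cases) (simp add: smult_cls add_cls r_distr)

lemma sm_assoc: "r \<in> carrier R \<Longrightarrow> s \<in> carrier R \<Longrightarrow> A \<in> carrier X \<Longrightarrow>
    (r \<otimes> s) \<odot>\<^bsub>X\<^esub> A = r \<odot>\<^bsub>X\<^esub> (s \<odot>\<^bsub>X\<^esub> A)"
  by (elim X_cases) (simp add: smult_cls m_assoc)

lemma sm_one: "A \<in> carrier X \<Longrightarrow> \<one> \<odot>\<^bsub>X\<^esub> A = A"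
  by (elim X_cases) (simp add: smult_cls)

lemma sm_zero_r: "r \<in> carrier R \<Longrightarrow> r \<odot>\<^bsub>X\<^esub> \<zero>\<^bsub>X\<^esub> = \<zero>\<^bsub>X\<^esub>"
  unfolding X_simps(2) by (simp add: smult_cls)

lemma sm_zero_l: "A \<in> carrier X \<Longrightarrow> \<zero> \<odot>\<^bsub>X\<^esub> A = \<zero>\<^bsub>X\<^esub>"
  unfolding X_simps(2) by (elim X_cases) (simp add: smult_cls)

lemma X_lm: "left_module R X"
  unfolding left_module_def
  apply (intro conjI ballI)
  apply (rule ring_axioms)
  apply (rule X_ag)
  apply (erule (1) sm_closed)
  apply (erule (2) sm_ldistr)
  apply (erule (2) sm_rdistr)
  apply (erule (2) sm_assoc)
  apply (erule sm_one)
  done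

end

sublocale qm \<subseteq> XG: abelian_group "QM R a b" by (rule X_ag)

context qm begin

lemma sm_finsum:
  assumes "finite I" "f \<in> I \<rightarrow> carrier X" "r \<in> carrier R"
  shows "r \<odot>\<^bsub>X\<^esub> finsum X f I = finsum X (\<lambda>i. r \<odot>\<^bsub>X\<^esub> f i) I"
  using assms
proof (induction I rule: finite_induct)
  case empty
  then show ?case by (simp add: sm_zero_r)
next
  case (insert x F)
  then have fF: "f \<in> F \<rightarrow> carrier X" and fx: "f x \<in> carrier X" by auto
  have g: "(\<lambda>i. r \<odot>\<^bsub>X\<^esub> f i) \<in> F \<rightarrow> carrier X" using fF insert(5) sm_closed by blast
  have "r \<odot>\<^bsub>X\<^esub> finsum X f (insert x F) = r \<odot>\<^bsub>X\<^esub> (f x \<oplus>\<^bsub>X\<^esub> finsum X f F)"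
    using insert fF fx by (simp add: XG.finsum_insert)
  also have "\<dots> = r \<odot>\<^bsub>X\<^esub> f x \<oplus>\<^bsub>X\<^esub> r \<odot>\<^bsub>X\<^esub> finsum X f F"
    using fx fF insert(1,5) by (simp add: sm_rdistr XG.finsum_closed)
  also have "\<dots> = r \<odot>\<^bsub>X\<^esub> f x \<oplus>\<^bsub>X\<^esub> finsum X (\<lambda>i. r \<odot>\<^bsub>X\<^esub> f i) F"
    using insert fF by simp
  also have "\<dots> = finsum X (\<lambda>i. r \<odot>\<^bsub>X\<^esub> f i) (insert x F)"
    using insert g fx sm_closed by (simp add: XG.finsum_insert)
  finally show ?case .
qed

end


context lr begin

lemma minus_zero_eq: "x \<in> carrier R \<Longrightarrow> y \<in> carrier R \<Longrightarrow> x \<ominus> y = \<zero> \<Longrightarrow> x = y"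
proof -
  assume xy: "x \<in> carrier R" "y \<in> carrier R" "x \<ominus> y = \<zero>"
  have "x = (x \<ominus> y) \<oplus> y" using xy(1,2) by algebra
  then show "x = y" using xy by simp
qed

lemma unit_cancel: "q \<in> Units R \<Longrightarrow> x \<in> carrier R \<Longrightarrow> q \<otimes> x = \<zero> \<Longrightarrow> x = \<zero>"
proof -
  assume q: "q \<in> Units R" and x: "x \<in> carrier R" and e: "q \<otimes> x = \<zero>"
  have qc: "q \<in> carrier R" "inv q \<in> carrier R" using q by auto
  have "x = (inv q \<otimes> q) \<otimes> x" using q x by simp
  also have "\<dots> = inv q \<otimes> (q \<otimes> x)" using qc x by (simp add: m_assoc)
  also have "\<dots> = \<zero>" using e qc by simp
  finally show ?thesis .
qed

lemma core:
  assumes c: "a \<in> carrier R" "b \<in> carrier R" "w \<in> carrier R" "z \<in> carrier R" "c \<in> carrier R" "r \<in> carrier R"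
    and cra: "c = r \<otimes> a" and cw: "c \<otimes> w = r \<otimes> b" and ce: "c = a \<oplus> (b \<ominus> a \<otimes> w) \<otimes> z"
  shows "(\<exists>s\<in>carrier R. a = b \<otimes> s) \<or> (\<exists>s\<in>carrier R. b = a \<otimes> s)"
proof -
  have "r \<otimes> (b \<ominus> a \<otimes> w) = r \<otimes> b \<ominus> (r \<otimes> a) \<otimes> w" using c by algebra
  also have "\<dots> = c \<otimes> w \<ominus> c \<otimes> w" using cra cw by simp
  also have "\<dots> = \<zero>" using c by (simp add: minus_eq r_neg)
  finally have rb: "r \<otimes> (b \<ominus> a \<otimes> w) = \<zero>" .
  have "r \<otimes> c = r \<otimes> a \<oplus> (r \<otimes> (b \<ominus> a \<otimes> w)) \<otimes> z" unfolding ce using c by algebra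
  also have "\<dots> = c" using rb cra c by simp
  finally have rc: "r \<otimes> c = c" .
  show ?thesis
  proof (cases "r \<in> Max")
    case False
    then have "r \<in> Units R" using unit c by blast
    then have "b \<ominus> a \<otimes> w = \<zero>" using unit_cancel rb c by simp
    then have "b = a \<otimes> w" using minus_zero_eq c by simp
    then show ?thesis using c by blast
  next
    case True
    then have "\<one> \<ominus> r \<in> Units R" using unit one_minus c by simp
    moreover have "(\<one> \<ominus> r) \<otimes> c = c \<ominus> r \<otimes> c" using c by algebra
    then have "(\<one> \<ominus> r) \<otimes> c = \<zero>" using rc c by (simp add: minus_eq r_neg)
    ultimately have c0: "c = \<zero>" using unit_cancel c by simp
    have "a \<otimes> (\<one> \<ominus> w \<otimes> z) \<ominus> b \<otimes> (\<ominus> z) = a \<otimes> \<one> \<oplus> (b \<ominus> a \<otimes> w) \<otimes> z" using c by algebra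
    also have "\<dots> = \<zero>" using ce c0 c by simp
    finally have key: "a \<otimes> (\<one> \<ominus> w \<otimes> z) = b \<otimes> (\<ominus> z)" using minus_zero_eq c by simp
    show ?thesis
    proof (cases "\<one> \<ominus> w \<otimes> z \<in> Max")
      case False
      then have q: "\<one> \<ominus> w \<otimes> z \<in> Units R" using unit c by simp
      have "a = a \<otimes> ((\<one> \<ominus> w \<otimes> z) \<otimes> inv (\<one> \<ominus> w \<otimes> z))" using q c by simp
      also have "\<dots> = (a \<otimes> (\<one> \<ominus> w \<otimes> z)) \<otimes> inv (\<one> \<ominus> w \<otimes> z)" using q c by (simp add: m_assoc)
      also have "\<dots> = b \<otimes> ((\<ominus> z) \<otimes> inv (\<one> \<ominus> w \<otimes> z))" unfolding key using q c by (simp add: m_assoc)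
      finally show ?thesis using q c by blast
    next
      case True
      have "w \<otimes> z \<notin> Max"
      proof
        assume "w \<otimes> z \<in> Max"
        then have "(\<one> \<ominus> w \<otimes> z) \<oplus> w \<otimes> z \<in> Max" using True Max_add by blast
        moreover have "(\<one> \<ominus> w \<otimes> z) \<oplus> w \<otimes> z = \<one>" using c by algebra
        ultimately show False using one_notin by simp
      qed
      then have "z \<notin> Max" using Max_lmult c by blast
      then have zu: "z \<in> Units R" using unit c by simp
      have bz: "b \<otimes> z = a \<otimes> (\<ominus> (\<one> \<ominus> w \<otimes> z))"
      proof -
        have "b \<otimes> z = \<ominus> (b \<otimes> (\<ominus> z))" using c by algebra
        also have "\<dots> = \<ominus> (a \<otimes> (\<one> \<ominus> w \<otimes> z))" using key by simp
        also have "\<dots> = a \<otimes> (\<ominus> (\<one> \<ominus> w \<otimes> z))" using c by algebra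
        finally show ?thesis .
      qed
      have "b = b \<otimes> (z \<otimes> inv z)" using zu c by simp
      also have "\<dots> = (b \<otimes> z) \<otimes> inv z" using zu c by (simp add: m_assoc)
      also have "\<dots> = a \<otimes> ((\<ominus> (\<one> \<ominus> w \<otimes> z)) \<otimes> inv z)" unfolding bz using zu c by (simp add: m_assoc)
      finally show ?thesis using zu c by blast
    qed
  qed
qed


lemma exists_top:
  assumes comp: "\<forall>x\<in>Max. \<forall>y\<in>Max. (\<exists>s\<in>carrier R. x = y \<otimes> s) \<or> (\<exists>s\<in>carrier R. y = x \<otimes> s)"
  shows "finite T \<Longrightarrow> T \<noteq> {} \<Longrightarrow> T \<subseteq> Max \<Longrightarrow> \<exists>m\<in>T. \<forall>s\<in>T. \<exists>g\<in>carrier R. s = m \<otimes> g"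
proof (induction T rule: finite_ne_induct)
  case (singleton x)
  then have "x \<in> carrier R" using Max_sub by blast
  then show ?case by (intro bexI[of _ x] ballI bexI[of _ \<one>]) auto
next
  case (insert x F)
  then obtain m where m: "m \<in> F" "\<forall>s\<in>F. \<exists>g\<in>carrier R. s = m \<otimes> g" by blast
  have xM: "x \<in> Max" and mM: "m \<in> Max" using insert m by auto
  then have xc: "x \<in> carrier R" and mc: "m \<in> carrier R" using Max_sub by auto
  from comp xM mM have "(\<exists>s\<in>carrier R. x = m \<otimes> s) \<or> (\<exists>s\<in>carrier R. m = x \<otimes> s)" by blast
  then show ?case
  proof
    assume "\<exists>s\<in>carrier R. x = m \<otimes> s"
    then have "\<forall>s\<in>insert x F. \<exists>g\<in>carrier R. s = m \<otimes> g" using m by blast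
    then show ?thesis using m by blast
  next
    assume "\<exists>s\<in>carrier R. m = x \<otimes> s"
    then obtain s0 where s0: "s0 \<in> carrier R" "m = x \<otimes> s0" by blast
    have "\<forall>s\<in>insert x F. \<exists>g\<in>carrier R. s = x \<otimes> g"
    proof
      fix s assume "s \<in> insert x F"
      then show "\<exists>g\<in>carrier R. s = x \<otimes> g"
      proof
        assume "s = x" then show ?thesis using xc by (intro bexI[of _ \<one>]) auto
      next
        assume "s \<in> F"
        then obtain g where g: "g \<in> carrier R" "s = m \<otimes> g" using m by blast
        then have "s = x \<otimes> (s0 \<otimes> g)" using s0 xc by (simp add: m_assoc)
        then show ?thesis using g s0 by blast
      qed
    qed
    then show ?thesis by blast
  qed
qed

lemma principal_from_comp:
  assumes comp: "\<forall>x\<in>Max. \<forall>y\<in>Max. (\<exists>s\<in>carrier R. x = y \<otimes> s) \<or> (\<exists>s\<in>carrier R. y = x \<otimes> s)"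
    and fg: "fg_right_ideal R Max"
  shows "principal_right_ideal R Max"
proof -
  obtain S where S: "finite S" "S \<subseteq> carrier R" "Max = right_ideal_gen R S"
    using fg unfolding fg_right_ideal_def by blast
  have memM: "y \<in> Max \<longleftrightarrow> (\<exists>f. f \<in> S \<rightarrow> carrier R \<and> y = finsum R (\<lambda>s. s \<otimes> f s) S)" for y
    unfolding S(3) right_ideal_gen_def by blast
  have SM: "S \<subseteq> Max"
  proof
    fix s0 assume s0: "s0 \<in> S"
    define f where "f = (\<lambda>s. if s = s0 then \<one> else \<zero>)"
    have fP: "f \<in> S \<rightarrow> carrier R" unfolding f_def by auto
    have "finsum R (\<lambda>s. s \<otimes> f s) S = finsum R (\<lambda>s. if s0 = s then s else \<zero>) S"
      using S(2) by (intro finsum_cong) (auto simp: f_def simp_implies_def subset_iff)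
    also have "\<dots> = s0" by (rule finsum_singleton) (use s0 S in auto)
    finally show "s0 \<in> Max" unfolding memM using fP by metis
  qed
  show ?thesis
  proof (cases "S = {}")
    case True
    then have "Max = {\<zero>}" unfolding memM using memM by (auto simp: finsum_empty)
    moreover have "{\<zero> \<otimes> r | r. r \<in> carrier R} = {\<zero>}" by (auto intro!: exI[of _ \<zero>])
    ultimately show ?thesis unfolding principal_right_ideal_def by blast
  next
    case False
    obtain m where m: "m \<in> S" "\<forall>s\<in>S. \<exists>g\<in>carrier R. s = m \<otimes> g"
      using exists_top[OF comp S(1) False SM] by blast
    have mc: "m \<in> carrier R" using m S by auto
    obtain G where G: "\<forall>s\<in>S. G s \<in> carrier R \<and> s = m \<otimes> G s" using m(2) by metis
    have "Max = {m \<otimes> r | r. r \<in> carrier R}"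
    proof (rule Set.set_eqI, rule iffI)
      fix y assume "y \<in> Max"
      then obtain f where f: "f \<in> S \<rightarrow> carrier R" "y = finsum R (\<lambda>s. s \<otimes> f s) S" unfolding memM by blast
      have GP: "(\<lambda>s. G s \<otimes> f s) \<in> S \<rightarrow> carrier R" using G f by auto
      have "finsum R (\<lambda>s. s \<otimes> f s) S = finsum R (\<lambda>s. m \<otimes> (G s \<otimes> f s)) S"
      proof (rule finsum_cong'[OF refl])
        show "(\<lambda>s. m \<otimes> (G s \<otimes> f s)) \<in> S \<rightarrow> carrier R" using GP mc by auto
        fix s assume "s \<in> S"
        then have Gs: "G s \<in> carrier R" "s = m \<otimes> G s" "f s \<in> carrier R" using G f by auto
        from Gs(2) have "s \<otimes> f s = (m \<otimes> G s) \<otimes> f s" by (rule arg_cong[where f="\<lambda>x. x \<otimes> f s"])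
        also have "\<dots> = m \<otimes> (G s \<otimes> f s)" using mc Gs(1,3) by (rule m_assoc)
        finally show "s \<otimes> f s = m \<otimes> (G s \<otimes> f s)" .
      qed
      also have "\<dots> = m \<otimes> finsum R (\<lambda>s. G s \<otimes> f s) S"
        using finsum_rdistr[OF S(1) mc GP] by simp
      finally have "y = m \<otimes> finsum R (\<lambda>s. G s \<otimes> f s) S" using f by simp
      moreover have "finsum R (\<lambda>s. G s \<otimes> f s) S \<in> carrier R" using GP by (rule finsum_closed)
      ultimately show "y \<in> {m \<otimes> r | r. r \<in> carrier R}" by blast
    next
      fix y assume "y \<in> {m \<otimes> r | r. r \<in> carrier R}"
      then obtain r where "r \<in> carrier R" "y = m \<otimes> r" by blast
      then show "y \<in> Max" using Max_rmult m SM by blast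
    qed
    then show ?thesis unfolding principal_right_ideal_def using mc by blast
  qed
qed

end


context lr begin
lemma finsum_Max: "finite I \<Longrightarrow> (\<forall>i\<in>I. f i \<in> Max) \<Longrightarrow> finsum R f I \<in> Max"
proof (induction I rule: finite_induct)
  case empty then show ?case by (simp add: Max_zero)
next
  case (insert x F)
  then have "f \<in> F \<rightarrow> carrier R" "f x \<in> carrier R" using Max_sub by auto
  then show ?case using insert by (simp add: finsum_insert Max_add)
qed
end

context qm begin

lemma fsum_cls: "finite I \<Longrightarrow> (\<forall>i\<in>I. f i \<in> carrier R \<and> g i \<in> carrier R) \<Longrightarrow>
   finsum X (\<lambda>i. C (f i) (g i)) I = C (finsum R f I) (finsum R g I)"
proof (induction I rule: finite_induct)
  case empty then show ?case by (simp add: X_simps(2))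
next
  case (insert x F)
  then have fg: "f \<in> F \<rightarrow> carrier R" "g \<in> F \<rightarrow> carrier R" "f x \<in> carrier R" "g x \<in> carrier R" by auto
  have P: "(\<lambda>i. C (f i) (g i)) \<in> F \<rightarrow> carrier X" using insert by (auto intro: cls_in)
  have "finsum X (\<lambda>i. C (f i) (g i)) (insert x F) = C (f x) (g x) \<oplus>\<^bsub>X\<^esub> finsum X (\<lambda>i. C (f i) (g i)) F"
    using insert(1,2) P fg by (simp add: XG.finsum_insert cls_in)
  also have "\<dots> = C (f x) (g x) \<oplus>\<^bsub>X\<^esub> C (finsum R f F) (finsum R g F)" using insert by simp
  also have "\<dots> = C (f x \<oplus> finsum R f F) (g x \<oplus> finsum R g F)" using fg by (simp add: add_cls finsum_closed)
  also have "\<dots> = C (finsum R f (insert x F)) (finsum R g (insert x F))" using insert(1,2) fg by (simp add: finsum_insert)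
  finally show ?case .
qed


lemma key_comp:
  assumes aM: "a \<in> Max" and bM: "b \<in> Max" and ds: "direct_sum_of_cyclics R X"
  shows "(\<exists>s\<in>carrier R. a = b \<otimes> s) \<or> (\<exists>s\<in>carrier R. b = a \<otimes> s)"
proof -
  obtain n and xs :: "nat \<Rightarrow> ('a \<times> 'a) set" where
    xs: "\<forall>i<n. xs i \<in> carrier X" and
    span: "\<forall>m\<in>carrier X. \<exists>c. (\<forall>i<n. c i \<in> carrier R) \<and> m = finsum X (\<lambda>i. c i \<odot>\<^bsub>X\<^esub> xs i) {..<n}" and
    ind: "\<forall>c. (\<forall>i<n. c i \<in> carrier R) \<and> finsum X (\<lambda>i. c i \<odot>\<^bsub>X\<^esub> xs i) {..<n} = \<zero>\<^bsub>X\<^esub>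
         \<longrightarrow> (\<forall>i<n. c i \<odot>\<^bsub>X\<^esub> xs i = \<zero>\<^bsub>X\<^esub>)"
    using ds unfolding direct_sum_of_cyclics_def by blast
  define e1 where "e1 = C \<one> \<zero>"
  define e2 where "e2 = C \<zero> \<one>"
  have e1c: "e1 \<in> carrier X" and e2c: "e2 \<in> carrier X" unfolding e1_def e2_def by (simp_all add: cls_in)
  obtain \<alpha> where \<alpha>: "\<forall>i<n. \<alpha> i \<in> carrier R" "e1 = finsum X (\<lambda>i. \<alpha> i \<odot>\<^bsub>X\<^esub> xs i) {..<n}"
    using span e1c by blast
  obtain \<beta> where \<beta>: "\<forall>i<n. \<beta> i \<in> carrier R" "e2 = finsum X (\<lambda>i. \<beta> i \<odot>\<^bsub>X\<^esub> xs i) {..<n}"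
    using span e2c by blast
  have ex: "\<forall>i. \<exists>p. i < n \<longrightarrow> (fst p \<in> carrier R \<and> snd p \<in> carrier R \<and> xs i = C (fst p) (snd p))"
  proof
    fix i show "\<exists>p. i < n \<longrightarrow> (fst p \<in> carrier R \<and> snd p \<in> carrier R \<and> xs i = C (fst p) (snd p))"
    proof (cases "i < n")
      case True
      then have "xs i \<in> carrier X" using xs by blast
      then obtain u v where "u \<in> carrier R" "v \<in> carrier R" "xs i = C u v" by (rule X_cases)
      then show ?thesis by (intro exI[of _ "(u, v)"]) simp
    next
      case False then show ?thesis by blast
    qed
  qed
  obtain P where P: "\<forall>i. i < n \<longrightarrow> (fst (P i) \<in> carrier R \<and> snd (P i) \<in> carrier R \<and> xs i = C (fst (P i)) (snd (P i)))"
    using choice[OF ex] by blast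
  define U where "U i = fst (P i)" for i
  define V where "V i = snd (P i)" for i
  have U: "\<And>i. i < n \<Longrightarrow> U i \<in> carrier R" and V: "\<And>i. i < n \<Longrightarrow> V i \<in> carrier R"
    and xsC: "\<And>i. i < n \<Longrightarrow> xs i = C (U i) (V i)" using P unfolding U_def V_def by auto
  have xsc: "\<And>i. i < n \<Longrightarrow> xs i \<in> carrier X" using xs by blast

  have smx: "finsum X (\<lambda>i. c i \<odot>\<^bsub>X\<^esub> xs i) {..<n} =
      C (finsum R (\<lambda>i. c i \<otimes> U i) {..<n}) (finsum R (\<lambda>i. c i \<otimes> V i) {..<n})"
    if c: "\<forall>i<n. c i \<in> carrier R" for c
  proof -
    have "finsum X (\<lambda>i. c i \<odot>\<^bsub>X\<^esub> xs i) {..<n} = finsum X (\<lambda>i. C (c i \<otimes> U i) (c i \<otimes> V i)) {..<n}"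
    proof (rule XG.finsum_cong'[OF refl])
      show "(\<lambda>i. C (c i \<otimes> U i) (c i \<otimes> V i)) \<in> {..<n} \<rightarrow> carrier X" using c U V by (auto intro: cls_in)
      fix i assume "i \<in> {..<n}"
      then have "i < n" by simp
      then show "c i \<odot>\<^bsub>X\<^esub> xs i = C (c i \<otimes> U i) (c i \<otimes> V i)" using c U V xsC by (simp add: smult_cls)
    qed
    also have "\<dots> = C (finsum R (\<lambda>i. c i \<otimes> U i) {..<n}) (finsum R (\<lambda>i. c i \<otimes> V i) {..<n})"
      by (rule fsum_cls) (use c U V in auto)
    finally show ?thesis .
  qed

  have comb: "r \<odot>\<^bsub>X\<^esub> finsum X (\<lambda>i. c i \<odot>\<^bsub>X\<^esub> xs i) {..<n} = finsum X (\<lambda>i. (r \<otimes> c i) \<odot>\<^bsub>X\<^esub> xs i) {..<n}"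
    if r: "r \<in> carrier R" and c: "\<forall>i<n. c i \<in> carrier R" for r c
  proof -
    have "r \<odot>\<^bsub>X\<^esub> finsum X (\<lambda>i. c i \<odot>\<^bsub>X\<^esub> xs i) {..<n} = finsum X (\<lambda>i. r \<odot>\<^bsub>X\<^esub> (c i \<odot>\<^bsub>X\<^esub> xs i)) {..<n}"
      by (rule sm_finsum) (use r c xsc sm_closed in auto)
    also have "\<dots> = finsum X (\<lambda>i. (r \<otimes> c i) \<odot>\<^bsub>X\<^esub> xs i) {..<n}"
    proof (rule XG.finsum_cong'[OF refl])
      show "(\<lambda>i. (r \<otimes> c i) \<odot>\<^bsub>X\<^esub> xs i) \<in> {..<n} \<rightarrow> carrier X" using r c xsc sm_closed by auto
      fix i assume "i \<in> {..<n}"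
      then show "r \<odot>\<^bsub>X\<^esub> (c i \<odot>\<^bsub>X\<^esub> xs i) = (r \<otimes> c i) \<odot>\<^bsub>X\<^esub> xs i" using r c xsc by (simp add: sm_assoc)
    qed
    finally show ?thesis .
  qed

  have addc: "finsum X (\<lambda>i. c i \<odot>\<^bsub>X\<^esub> xs i) {..<n} \<oplus>\<^bsub>X\<^esub> finsum X (\<lambda>i. d i \<odot>\<^bsub>X\<^esub> xs i) {..<n}
     = finsum X (\<lambda>i. (c i \<oplus> d i) \<odot>\<^bsub>X\<^esub> xs i) {..<n}"
    if c: "\<forall>i<n. c i \<in> carrier R" and d: "\<forall>i<n. d i \<in> carrier R" for c d
  proof -
    have "finsum X (\<lambda>i. c i \<odot>\<^bsub>X\<^esub> xs i) {..<n} \<oplus>\<^bsub>X\<^esub> finsum X (\<lambda>i. d i \<odot>\<^bsub>X\<^esub> xs i) {..<n}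
       = finsum X (\<lambda>i. c i \<odot>\<^bsub>X\<^esub> xs i \<oplus>\<^bsub>X\<^esub> d i \<odot>\<^bsub>X\<^esub> xs i) {..<n}"
      by (rule XG.finsum_addf[symmetric]) (use c d xsc sm_closed in auto)
    also have "\<dots> = finsum X (\<lambda>i. (c i \<oplus> d i) \<odot>\<^bsub>X\<^esub> xs i) {..<n}"
    proof (rule XG.finsum_cong'[OF refl])
      show "(\<lambda>i. (c i \<oplus> d i) \<odot>\<^bsub>X\<^esub> xs i) \<in> {..<n} \<rightarrow> carrier X" using c d xsc sm_closed by auto
      fix i assume "i \<in> {..<n}"
      then show "c i \<odot>\<^bsub>X\<^esub> xs i \<oplus>\<^bsub>X\<^esub> d i \<odot>\<^bsub>X\<^esub> xs i = (c i \<oplus> d i) \<odot>\<^bsub>X\<^esub> xs i"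
        using c d xsc by (simp add: sm_ldistr)
    qed
    finally show ?thesis .
  qed

  have "\<exists>i<n. \<alpha> i \<otimes> U i \<notin> Max"
  proof (rule ccontr)
    assume "\<not> ?thesis"
    then have "finsum R (\<lambda>i. \<alpha> i \<otimes> U i) {..<n} \<in> Max" by (intro finsum_Max) auto
    moreover have "C \<one> \<zero> = C (finsum R (\<lambda>i. \<alpha> i \<otimes> U i) {..<n}) (finsum R (\<lambda>i. \<alpha> i \<otimes> V i) {..<n})"
      using \<alpha> smx e1_def by simp
    then obtain t where t: "t \<in> carrier R" "\<one> = finsum R (\<lambda>i. \<alpha> i \<otimes> U i) {..<n} \<oplus> t \<otimes> a"
      using cls_eq \<alpha>(1) U V by (auto intro!: finsum_closed)
    ultimately have "\<one> \<in> Max" using Max_add Max_lmult aM by simp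
    then show False using one_notin by simp
  qed
  then obtain i0 where i0: "i0 < n" "\<alpha> i0 \<otimes> U i0 \<notin> Max" by blast
  define u where "u = U i0"
  define v where "v = V i0"
  define x0 where "x0 = xs i0"
  have uc: "u \<in> carrier R" and vc: "v \<in> carrier R" and x0C: "x0 = C u v" and x0c: "x0 \<in> carrier X"
    using U V xsC xsc i0 unfolding u_def v_def x0_def by auto
  have "u \<notin> Max" using i0 Max_lmult \<alpha>(1) unfolding u_def by blast
  then have uU: "u \<in> Units R" using unit uc by simp
  have ac: "a \<in> carrier R" and bc: "b \<in> carrier R" using a b .
  have \<alpha>0: "\<alpha> i0 \<in> carrier R" and \<beta>0: "\<beta> i0 \<in> carrier R" using \<alpha> \<beta> i0 by auto

  have "a \<odot>\<^bsub>X\<^esub> e1 \<oplus>\<^bsub>X\<^esub> b \<odot>\<^bsub>X\<^esub> e2 = C a b"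
    unfolding e1_def e2_def using ac bc by (simp add: smult_cls add_cls)
  also have "C a b = \<zero>\<^bsub>X\<^esub>" using zero_iff[OF ac bc] ac bc by (auto intro!: bexI[of _ \<one>])
  finally have "a \<odot>\<^bsub>X\<^esub> e1 \<oplus>\<^bsub>X\<^esub> b \<odot>\<^bsub>X\<^esub> e2 = \<zero>\<^bsub>X\<^esub>" .
  moreover have "a \<odot>\<^bsub>X\<^esub> e1 \<oplus>\<^bsub>X\<^esub> b \<odot>\<^bsub>X\<^esub> e2 = finsum X (\<lambda>i. (a \<otimes> \<alpha> i \<oplus> b \<otimes> \<beta> i) \<odot>\<^bsub>X\<^esub> xs i) {..<n}"
    using \<alpha> \<beta> ac bc by (simp add: comb addc)
  ultimately have fs0: "finsum X (\<lambda>i. (a \<otimes> \<alpha> i \<oplus> b \<otimes> \<beta> i) \<odot>\<^bsub>X\<^esub> xs i) {..<n} = \<zero>\<^bsub>X\<^esub>" by simp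
  have cA: "\<forall>i<n. a \<otimes> \<alpha> i \<oplus> b \<otimes> \<beta> i \<in> carrier R" using \<alpha>(1) \<beta>(1) ac bc by auto
  have "\<forall>i<n. (a \<otimes> \<alpha> i \<oplus> b \<otimes> \<beta> i) \<odot>\<^bsub>X\<^esub> xs i = \<zero>\<^bsub>X\<^esub>"
    using ind[THEN spec[of _ "\<lambda>i. a \<otimes> \<alpha> i \<oplus> b \<otimes> \<beta> i"]] cA fs0 by blast
  then have A0: "(a \<otimes> \<alpha> i0 \<oplus> b \<otimes> \<beta> i0) \<odot>\<^bsub>X\<^esub> x0 = \<zero>\<^bsub>X\<^esub>" using i0 unfolding x0_def by blast

  define p where "p j = u \<otimes> \<alpha> j \<oplus> v \<otimes> \<beta> j" for j
  define q where "q j = (if j = i0 then \<one> else \<zero>)" for j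
  have pc: "\<forall>j<n. p j \<in> carrier R" using \<alpha> \<beta> uc vc unfolding p_def by auto
  have qc: "\<forall>j<n. q j \<in> carrier R" unfolding q_def by auto
  have "x0 = u \<odot>\<^bsub>X\<^esub> e1 \<oplus>\<^bsub>X\<^esub> v \<odot>\<^bsub>X\<^esub> e2"
    unfolding e1_def e2_def x0C using uc vc by (simp add: smult_cls add_cls)
  also have "\<dots> = finsum X (\<lambda>j. p j \<odot>\<^bsub>X\<^esub> xs j) {..<n}"
    unfolding p_def using \<alpha> \<beta> uc vc by (simp add: comb addc)
  finally have xp: "x0 = finsum X (\<lambda>j. p j \<odot>\<^bsub>X\<^esub> xs j) {..<n}" .
  have "finsum X (\<lambda>j. q j \<odot>\<^bsub>X\<^esub> xs j) {..<n} = finsum X (\<lambda>j. if i0 = j then xs j else \<zero>\<^bsub>X\<^esub>) {..<n}"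
  proof (rule XG.finsum_cong'[OF refl])
    show "(\<lambda>j. if i0 = j then xs j else \<zero>\<^bsub>X\<^esub>) \<in> {..<n} \<rightarrow> carrier X" using xsc by auto
    fix j assume "j \<in> {..<n}"
    then show "q j \<odot>\<^bsub>X\<^esub> xs j = (if i0 = j then xs j else \<zero>\<^bsub>X\<^esub>)"
      unfolding q_def using xsc by (auto simp: sm_one sm_zero_l)
  qed
  also have "\<dots> = x0" unfolding x0_def by (rule XG.finsum_singleton) (use i0 xsc in auto)
  finally have xq: "finsum X (\<lambda>j. q j \<odot>\<^bsub>X\<^esub> xs j) {..<n} = x0" .
  define cc where "cc j = p j \<ominus> q j" for j
  have ccc: "\<forall>j<n. cc j \<in> carrier R" using pc qc unfolding cc_def by auto
  have Fc: "finsum X (\<lambda>j. cc j \<odot>\<^bsub>X\<^esub> xs j) {..<n} \<in> carrier X"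
    using ccc xsc sm_closed by (intro XG.finsum_closed) auto
  have "finsum X (\<lambda>j. cc j \<odot>\<^bsub>X\<^esub> xs j) {..<n} \<oplus>\<^bsub>X\<^esub> x0 = finsum X (\<lambda>j. (cc j \<oplus> q j) \<odot>\<^bsub>X\<^esub> xs j) {..<n}"
    unfolding xq[symmetric] using ccc qc by (rule addc)
  also have "\<dots> = finsum X (\<lambda>j. p j \<odot>\<^bsub>X\<^esub> xs j) {..<n}"
  proof (rule XG.finsum_cong'[OF refl])
    show "(\<lambda>j. p j \<odot>\<^bsub>X\<^esub> xs j) \<in> {..<n} \<rightarrow> carrier X" using pc xsc sm_closed by auto
    fix j assume "j \<in> {..<n}"
    then have "p j \<in> carrier R" "q j \<in> carrier R" using pc qc by auto
    then have "cc j \<oplus> q j = p j" unfolding cc_def by algebra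
    then show "(cc j \<oplus> q j) \<odot>\<^bsub>X\<^esub> xs j = p j \<odot>\<^bsub>X\<^esub> xs j" by simp
  qed
  also have "\<dots> = x0" using xp by simp
  finally have "finsum X (\<lambda>j. cc j \<odot>\<^bsub>X\<^esub> xs j) {..<n} = \<zero>\<^bsub>X\<^esub>"
    using XG.add.r_cancel_one[OF x0c Fc] by simp
  then have "\<forall>j<n. cc j \<odot>\<^bsub>X\<^esub> xs j = \<zero>\<^bsub>X\<^esub>" using ind ccc by blast
  then have "cc i0 \<odot>\<^bsub>X\<^esub> xs i0 = \<zero>\<^bsub>X\<^esub>" using i0(1) by blast
  then have B0: "((u \<otimes> \<alpha> i0 \<oplus> v \<otimes> \<beta> i0) \<ominus> \<one>) \<odot>\<^bsub>X\<^esub> x0 = \<zero>\<^bsub>X\<^esub>"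
    unfolding cc_def p_def q_def x0_def by simp

  define u' where "u' = inv u"
  have u'c: "u' \<in> carrier R" and uu': "u \<otimes> u' = \<one>" and u'u: "u' \<otimes> u = \<one>"
    using uU unfolding u'_def by auto
  define A1 where "A1 = a \<otimes> \<alpha> i0 \<oplus> b \<otimes> \<beta> i0"
  define Q where "Q = (u \<otimes> \<alpha> i0 \<oplus> v \<otimes> \<beta> i0) \<ominus> \<one>"
  define D where "D = A1 \<ominus> (a \<otimes> u') \<otimes> Q"
  have A1c: "A1 \<in> carrier R" and Qc: "Q \<in> carrier R" and Dc: "D \<in> carrier R"
    unfolding D_def A1_def Q_def using ac bc \<alpha>0 \<beta>0 uc vc u'c by auto
  have "D = A1 \<oplus> (\<ominus> (a \<otimes> u')) \<otimes> Q" unfolding D_def using A1c Qc ac u'c by algebra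
  then have "D \<odot>\<^bsub>X\<^esub> x0 = A1 \<odot>\<^bsub>X\<^esub> x0 \<oplus>\<^bsub>X\<^esub> (\<ominus> (a \<otimes> u')) \<odot>\<^bsub>X\<^esub> (Q \<odot>\<^bsub>X\<^esub> x0)"
    using A1c Qc ac u'c x0c by (simp add: sm_ldistr sm_assoc)
  also have "\<dots> = \<zero>\<^bsub>X\<^esub>" using A0 B0 ac u'c unfolding A1_def Q_def by (simp add: sm_zero_r)
  finally have "D \<odot>\<^bsub>X\<^esub> x0 = \<zero>\<^bsub>X\<^esub>" .
  then have "C (D \<otimes> u) (D \<otimes> v) = \<zero>\<^bsub>X\<^esub>" unfolding x0C using Dc uc vc by (simp add: smult_cls)
  then obtain r where r: "r \<in> carrier R" "D \<otimes> u = r \<otimes> a" "D \<otimes> v = r \<otimes> b"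
    using zero_iff Dc uc vc by auto
  have cw: "(D \<otimes> u) \<otimes> (u' \<otimes> v) = r \<otimes> b"
  proof -
    have "(D \<otimes> u) \<otimes> (u' \<otimes> v) = D \<otimes> (u \<otimes> u') \<otimes> v" using Dc uc u'c vc by (simp add: m_assoc)
    also have "\<dots> = D \<otimes> v" using uu' Dc by simp
    finally show ?thesis using r by simp
  qed
  have "D \<otimes> u = a \<otimes> (u' \<otimes> u) \<oplus> (b \<ominus> a \<otimes> (u' \<otimes> v)) \<otimes> (\<beta> i0 \<otimes> u)
      \<oplus> (a \<otimes> \<alpha> i0 \<otimes> u \<ominus> a \<otimes> (u' \<otimes> u) \<otimes> \<alpha> i0 \<otimes> u)"
    unfolding D_def A1_def Q_def using ac bc \<alpha>0 \<beta>0 uc vc u'c by algebra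
  also have "\<dots> = a \<oplus> (b \<ominus> a \<otimes> (u' \<otimes> v)) \<otimes> (\<beta> i0 \<otimes> u)"
    unfolding u'u using ac bc \<alpha>0 \<beta>0 uc vc u'c by (simp add: minus_eq r_neg)
  finally have ce: "D \<otimes> u = a \<oplus> (b \<ominus> a \<otimes> (u' \<otimes> v)) \<otimes> (\<beta> i0 \<otimes> u)" .
  show ?thesis
    by (rule core[OF ac bc _ _ _ r(1) r(2) cw ce]) (use u'c vc \<beta>0 uc Dc in auto)
qed

end
theorem theorem2p4:
  fixes R :: "'a ring" and Max :: "'a set"
  assumes "local_ring R"
    and "maximal_left_ideal R Max"
    and "fg_left_ideal R Max"
    and "fg_right_ideal R Max"
    and "\<forall>M :: ('a, ('a \<times> 'a) set) module.
           left_module R M \<and> two_generated R M \<longrightarrow> direct_sum_of_cyclics R M"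
  shows "principal_left_ideal R Max \<or> principal_right_ideal R Max"
proof -
  have rR: "ring R" using assms(1) unfolding local_ring_def by blast
  have uq: "\<And>I. maximal_left_ideal R I \<Longrightarrow> I = Max" using assms(1,2) unfolding local_ring_def by blast
  have lrR: "lr R Max"
    apply (rule lr.intro[OF rR])
    apply (rule lr_axioms.intro)
    apply (rule assms(2))
    apply (erule uq)
    done
  interpret L: lr R Max by (rule lrR)
  have comp: "\<forall>x\<in>Max. \<forall>y\<in>Max. (\<exists>s\<in>carrier R. x = y \<otimes>\<^bsub>R\<^esub> s) \<or> (\<exists>s\<in>carrier R. y = x \<otimes>\<^bsub>R\<^esub> s)"
  proof (intro ballI)
    fix x y assume xM: "x \<in> Max" and yM: "y \<in> Max"
    then have xc: "x \<in> carrier R" and yc: "y \<in> carrier R" using L.Max_sub by auto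
    have qmR: "qm R Max x y"
      apply (rule qm.intro[OF lrR])
      apply (rule qm_axioms.intro)
      apply (rule xc)
      apply (rule yc)
      done
    interpret Q: qm R Max x y by (rule qmR)
    have lm: "left_module R (QM R x y)" by (rule Q.X_lm)
    have tg: "two_generated R (QM R x y)"
      unfolding two_generated_def
    proof (rule bexI[where x="cls R x y \<one>\<^bsub>R\<^esub> \<zero>\<^bsub>R\<^esub>"], rule bexI[where x="cls R x y \<zero>\<^bsub>R\<^esub> \<one>\<^bsub>R\<^esub>"])
      show "cls R x y \<one>\<^bsub>R\<^esub> \<zero>\<^bsub>R\<^esub> \<in> carrier (QM R x y)" by (rule Q.cls_in) simp_all
      show "cls R x y \<zero>\<^bsub>R\<^esub> \<one>\<^bsub>R\<^esub> \<in> carrier (QM R x y)" by (rule Q.cls_in) simp_all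
      show "carrier (QM R x y) = {r \<odot>\<^bsub>QM R x y\<^esub> cls R x y \<one>\<^bsub>R\<^esub> \<zero>\<^bsub>R\<^esub> \<oplus>\<^bsub>QM R x y\<^esub> s \<odot>\<^bsub>QM R x y\<^esub> cls R x y \<zero>\<^bsub>R\<^esub> \<one>\<^bsub>R\<^esub> |
          r s. r \<in> carrier R \<and> s \<in> carrier R}"
      proof (rule Set.set_eqI, rule iffI)
        fix A assume "A \<in> carrier (QM R x y)"
        then obtain u v where uv: "u \<in> carrier R" "v \<in> carrier R" "A = cls R x y u v" by (rule Q.X_cases)
        have "A = u \<odot>\<^bsub>QM R x y\<^esub> cls R x y \<one>\<^bsub>R\<^esub> \<zero>\<^bsub>R\<^esub> \<oplus>\<^bsub>QM R x y\<^esub> v \<odot>\<^bsub>QM R x y\<^esub> cls R x y \<zero>\<^bsub>R\<^esub> \<one>\<^bsub>R\<^esub>"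
          using uv by (simp add: Q.smult_cls Q.add_cls)
        then show "A \<in> {r \<odot>\<^bsub>QM R x y\<^esub> cls R x y \<one>\<^bsub>R\<^esub> \<zero>\<^bsub>R\<^esub> \<oplus>\<^bsub>QM R x y\<^esub> s \<odot>\<^bsub>QM R x y\<^esub> cls R x y \<zero>\<^bsub>R\<^esub> \<one>\<^bsub>R\<^esub> |
          r s. r \<in> carrier R \<and> s \<in> carrier R}" using uv by blast
      next
        fix A assume "A \<in> {r \<odot>\<^bsub>QM R x y\<^esub> cls R x y \<one>\<^bsub>R\<^esub> \<zero>\<^bsub>R\<^esub> \<oplus>\<^bsub>QM R x y\<^esub> s \<odot>\<^bsub>QM R x y\<^esub> cls R x y \<zero>\<^bsub>R\<^esub> \<one>\<^bsub>R\<^esub> |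
          r s. r \<in> carrier R \<and> s \<in> carrier R}"
        then obtain r s where rs: "r \<in> carrier R" "s \<in> carrier R"
          "A = r \<odot>\<^bsub>QM R x y\<^esub> cls R x y \<one>\<^bsub>R\<^esub> \<zero>\<^bsub>R\<^esub> \<oplus>\<^bsub>QM R x y\<^esub> s \<odot>\<^bsub>QM R x y\<^esub> cls R x y \<zero>\<^bsub>R\<^esub> \<one>\<^bsub>R\<^esub>" by blast
        then show "A \<in> carrier (QM R x y)" by (simp add: Q.smult_cls Q.add_cls Q.cls_in)
      qed
    qed
    have "direct_sum_of_cyclics R (QM R x y)" using assms(5) lm tg by blast
    then show "(\<exists>s\<in>carrier R. x = y \<otimes>\<^bsub>R\<^esub> s) \<or> (\<exists>s\<in>carrier R. y = x \<otimes>\<^bsub>R\<^esub> s)"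
      using Q.key_comp xM yM by blast
  qed
  have "principal_right_ideal R Max" using L.principal_from_comp[OF comp assms(4)] .
  then show ?thesis by blast
qed


end
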